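(* Let $d\in\mathbb{N}$ and $N=2^d$. There exists a sequence of side information $a_{1:N}\in(\{0,1\}^d)^N$ such that for every probabilistic predictor $\rho$ there exists $\mathcal{S}\in\mathcal{P}_d$ such that, for the labels $x_t:=h_{\mathcal{S}}(a_t)$ ($t=1,\dots,N$), one has $\mathcal{L}_N(\rho)\ge d$.
   Context: $\mathcal{P}_d$ is the power set of $\{1,\dots,d\}$; for $\mathcal{S}\in\mathcal{P}_d$ and $a\in\{0,1\}^d$, $h_{\mathcal{S}}(a)=\bigwedge_{i\in\mathcal{S}}a^i$ (equal to $1$ if $\mathcal{S}=\emptyset$). A probabilistic predictor $\rho$ is a sequence of rules that at each time $t$, given past labels $x_{<t}$ and side information $a_{1:t}$, outputs a probability distribution $\rho_t(\cdot\mid x_{<t};a_{1:t})$ on $\{0,1\}$. Its cumulative log-loss is $\mathcal{L}_n(\rho):=-\log_2\prod_{t=1}^n\rho_t(x_t\mid x_{<t};a_{1:t})$ (possibly $+\infty$). *)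

theory Defs
  imports "HOL-Probability.Probability"
begin

text \<open>Side information vectors in {0,1}^d are bool lists of length d; coordinate i
(1-based in the paper) is list position i-1. Subsets S of {1..d} are subsets of {0..<d}.\<close>

definition hS :: "nat set \<Rightarrow> bool list \<Rightarrow> bool" where
  "hS S a = (\<forall>i\<in>S. a ! i)"

text \<open>A probabilistic predictor: at time t, given past labels x_1..x_{t-1} and side
information a_1..a_t, a distribution on {0,1} (= bool).\<close>
type_synonym predictor = "nat \<Rightarrow> bool list \<Rightarrow> bool list list \<Rightarrow> bool pmf"

definition seq_prob :: "predictor \<Rightarrow> (nat \<Rightarrow> bool) \<Rightarrow> (nat \<Rightarrow> bool list) \<Rightarrow> nat \<Rightarrow> real" where
  "seq_prob \<rho> x a n = (\<Prod>t\<in>{1..n}. pmf (\<rho> t (map x [1..<t]) (map a [1..<Suc t])) (x t))"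

definition log_loss :: "predictor \<Rightarrow> (nat \<Rightarrow> bool) \<Rightarrow> (nat \<Rightarrow> bool list) \<Rightarrow> nat \<Rightarrow> ereal" where
  "log_loss \<rho> x a n =
     (if seq_prob \<rho> x a n = 0 then \<infinity> else ereal (- log 2 (seq_prob \<rho> x a n)))"

end

theory Submission
  imports Defs
begin

lemma pmf_bool_sum: "pmf (p::bool pmf) True + pmf p False = 1"
proof -
  have "(\<Sum>x\<in>(UNIV::bool set). pmf p x) = 1" by (rule sum_pmf_eq_1) auto
  thus ?thesis by (simp add: UNIV_bool)
qed

primrec bits :: "predictor \<Rightarrow> (nat \<Rightarrow> bool list) \<Rightarrow> nat \<Rightarrow> bool list" where
  "bits \<rho> a 0 = []"
| "bits \<rho> a (Suc n) = bits \<rho> a n @ [pmf (\<rho> (Suc n) (bits \<rho> a n) (map a [1..<Suc (Suc n)])) True \<le> 1/2]"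

lemma bits_len[simp]: "length (bits \<rho> a n) = n"
  by (induction n) auto

lemma bits_take: "n \<le> m \<Longrightarrow> take n (bits \<rho> a m) = bits \<rho> a n"
proof (induction m)
  case 0 then show ?case by simp
next
  case (Suc m)
  show ?case
  proof (cases "n = Suc m")
    case True then show ?thesis by simp
  next
    case False
    then have "n \<le> m" using Suc.prems by simp
    then show ?thesis using Suc.IH by simp
  qed
qed

lemma bits_nth: "j < n \<Longrightarrow> n \<le> m \<Longrightarrow> bits \<rho> a m ! j = bits \<rho> a n ! j"
  by (metis bits_take nth_take)

lemma pmf_choice: "pmf (p::bool pmf) (pmf p True \<le> 1/2) \<le> 1/2"
  using pmf_bool_sum[of p] by (cases "pmf p True \<le> 1/2") auto

lemma factor_le: "pmf (\<rho> (Suc n) (bits \<rho> a n) (map a [1..<Suc (Suc n)])) (bits \<rho> a (Suc n) ! n) \<le> 1/2"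
proof -
  have "bits \<rho> a (Suc n) ! n = (pmf (\<rho> (Suc n) (bits \<rho> a n) (map a [1..<Suc (Suc n)])) True \<le> 1/2)"
    by (simp only: bits.simps nth_append bits_len) simp
  then show ?thesis using pmf_choice by metis
qed

theorem mainTheorem4:
  fixes d :: nat
  shows "\<exists>a :: nat \<Rightarrow> bool list.
           (\<forall>t\<in>{1..2^d}. length (a t) = d) \<and>
           (\<forall>\<rho> :: predictor. \<exists>S. S \<subseteq> {0..<d} \<and>
              log_loss \<rho> (\<lambda>t. hS S (a t)) a (2^d) \<ge> ereal (real d))"
proof -
  define a :: "nat \<Rightarrow> bool list" where
    "a s = (if 1 \<le> s \<and> s \<le> d then map (\<lambda>i. i \<noteq> s - 1) [0..<d] else replicate d True)" for s
  have len: "\<forall>t\<in>{1..2^d}. length (a t) = d" by (simp add: a_def)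
  have dle: "d \<le> 2^d" using less_exp[of d] by simp
  have main: "\<exists>S. S \<subseteq> {0..<d} \<and> log_loss \<rho> (\<lambda>t. hS S (a t)) a (2^d) \<ge> ereal (real d)"
    for \<rho> :: predictor
  proof -
    define B where "B = bits \<rho> a d"
    define S where "S = {i. i < d \<and> \<not> B ! i}"
    define x where "x = (\<lambda>t. hS S (a t))"
    have xs: "x (Suc j) = B ! j" if "j < d" for j
      using that by (auto simp: x_def hS_def a_def S_def)
    have xpre: "map x [1..<Suc n] = bits \<rho> a n" if "n < d" for n
    proof (rule nth_equalityI)
      show "length (map x [1..<Suc n]) = length (bits \<rho> a n)" by simp
      fix j assume "j < length (map x [1..<Suc n])"
      then have j: "j < n" by (simp only: length_map length_upt)
      have "map x [1..<Suc n] ! j = x (Suc j)" using j by (simp only: nth_map length_upt nth_upt) simp_all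
      also have "\<dots> = B ! j" using xs j that by simp
      also have "\<dots> = bits \<rho> a n ! j" unfolding B_def using j that by (intro bits_nth) auto
      finally show "map x [1..<Suc n] ! j = bits \<rho> a n ! j" .
    qed
    define f where "f t = pmf (\<rho> t (map x [1..<t]) (map a [1..<Suc t])) (x t)" for t
    have fle: "f t \<le> (if t \<le> d then 1/2 else 1)" if "t \<in> {1..2^d}" for t
    proof (cases "t \<le> d")
      case True
      have t1: "1 \<le> t" using that by simp
      then obtain n where n: "t = Suc n" by (cases t) auto
      then have n2: "n < d" using True by simp
      have "x t = bits \<rho> a (Suc n) ! n"
        using n n2 xs[of n] bits_nth[of n "Suc n" d \<rho> a] unfolding B_def by simp
      then have "f t = pmf (\<rho> (Suc n) (bits \<rho> a n) (map a [1..<Suc (Suc n)])) (bits \<rho> a (Suc n) ! n)"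
        using n n2 xpre[of n] by (simp add: f_def)
      then show ?thesis using factor_le True by simp
    next
      case False then show ?thesis by (simp add: f_def pmf_le_1)
    qed
    have sp: "seq_prob \<rho> x a (2^d) = (\<Prod>t\<in>{1..2^d}. f t)"
      by (simp add: seq_prob_def f_def)
    have "(\<Prod>t\<in>{1..2^d}. f t) \<le> (\<Prod>t\<in>{1..(2::nat)^d}. (if t \<le> d then 1/2 else 1::real))"
      by (rule prod_mono) (use fle in \<open>auto simp: f_def\<close>)
    also have "\<dots> = (\<Prod>t\<in>{1..d}. 1/2)"
    proof -
      have "{1..(2::nat)^d} \<inter> {t. t \<le> d} = {1..d}" using dle by (auto intro: le_trans[OF _ dle])
      then show ?thesis by (simp add: prod.If_cases)
    qed
    also have "\<dots> = (1/2)^d" by simp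
    finally have ple: "seq_prob \<rho> x a (2^d) \<le> (1/2)^d" using sp by simp
    have pnn: "seq_prob \<rho> x a (2^d) \<ge> 0" unfolding seq_prob_def by (simp add: prod_nonneg)
    have "log_loss \<rho> x a (2^d) \<ge> ereal (real d)"
    proof (cases "seq_prob \<rho> x a (2^d) = 0")
      case True then show ?thesis by (simp add: log_loss_def)
    next
      case False
      then have pos: "seq_prob \<rho> x a (2^d) > 0" using pnn by simp
      have "log 2 (seq_prob \<rho> x a (2^d)) \<le> log 2 ((1/2)^d)"
        using pos ple by simp
      also have "\<dots> = - real d" by (simp add: log_nat_power log_divide)
      finally show ?thesis using False by (simp add: log_loss_def)
    qed
    moreover have "S \<subseteq> {0..<d}" by (auto simp: S_def)
    ultimately show ?thesis unfolding x_def by blast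
  qed
  show ?thesis using len main by blast
qed

end
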